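(* The systems ${\bf Km}$ and ${\bf Km}_\circ$ coincide: for every $\Gamma\cup\{\alpha\}\subseteq For$, $\Gamma\vdash_{\bf Km}\alpha$ iff $\Gamma\vdash_{{\bf Km}_\circ}\alpha$.
   Context: Formulas are built from a denumerable set of propositional variables by the unary connectives $\neg$, $\Box$ and the binary connective $\to$; $For$ is the set of all formulas. Abbreviations: $\Diamond\alpha:=\neg\Box\neg\alpha$, $\alpha\vee\beta:=\neg\alpha\to\beta$, $\alpha\wedge\beta:=\neg(\alpha\to\neg\beta)$, $\circ\alpha:=\Box\alpha\to\Diamond\alpha$, $\bullet\alpha:=\neg\circ\alpha$. All Hilbert calculi below have as axioms all instances (over $For$) of the axiom schemas of a standard Hilbert calculus for classical propositional logic in the signature $\{\neg,\to\}$, plus the listed modal schemas, with modus ponens as the only rule; $\Gamma\vdash_{\bf L}\alpha$ means there is a derivation of $\alpha$ from $\Gamma$ in ${\bf L}$. Common schemas: (M1) $\neg\Diamond\alpha\to\Box(\alpha\to\beta)$; (M2) $\Box\beta\to\Box(\alpha\to\beta)$; (DN1) $\Box\alpha\to\Box\neg\neg\alpha$; (DN2) $\Box\neg\neg\alpha\to\Box\alpha$. ${\bf Km}$: (M1), (M2), (DN1), (DN2) and (K') $\Diamond\alpha\to(\Box(\alpha\to\beta)\to(\Box\alpha\to\Box\beta))$; (K1') $\Diamond\neg\beta\to(\Box(\alpha\to\beta)\to(\Diamond\alpha\to\Diamond\beta))$; (K2') $\Diamond\alpha\to(\Diamond(\alpha\to\beta)\to(\Box\alpha\to\Diamond\beta))$;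 (M3') $(\Diamond\alpha\vee\Diamond\neg\alpha)\to(\Diamond\beta\to\Diamond(\alpha\to\beta))$; (M4') $\Diamond\neg\beta\to(\Diamond\neg\alpha\to\Diamond(\alpha\to\beta))$; (I1) $(\Box\alpha\wedge\Box\neg\alpha)\to(\Box(\alpha\to\beta)\wedge\Box\neg(\alpha\to\beta))$; (I2) $(\Box\beta\wedge\Box\neg\beta)\to(\Box(\alpha\to\beta)\wedge\Box\neg(\alpha\to\beta))$. ${\bf Km}_\circ$: (M1), (M2), (DN1), (DN2) and (K'') $\circ\alpha\to(\Box(\alpha\to\beta)\to(\Box\alpha\to\Box\beta))$; (K1'') $\circ\beta\to(\Box(\alpha\to\beta)\to(\Diamond\alpha\to\Diamond\beta))$; (K2'') $\circ\alpha\to(\Diamond(\alpha\to\beta)\to(\Box\alpha\to\Diamond\beta))$; (M3'') $\circ\alpha\to(\Diamond\beta\to\Diamond(\alpha\to\beta))$; (M4'') $\circ\beta\to(\Diamond\neg\alpha\to\Diamond(\alpha\to\beta))$; (I1') $\bullet\alpha\to\bullet(\alpha\to\beta)$; (I2') $\bullet\beta\to\bullet(\alpha\to\beta)$. *)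

theory Defs
  imports Main
begin

datatype fm = Var nat | Neg fm | Box fm | Imp fm fm

definition Dia :: "fm \<Rightarrow> fm" where "Dia a = Neg (Box (Neg a))"
definition Or :: "fm \<Rightarrow> fm \<Rightarrow> fm" where "Or a b = Imp (Neg a) b"
definition And :: "fm \<Rightarrow> fm \<Rightarrow> fm" where "And a b = Neg (Imp a (Neg b))"
definition Cons :: "fm \<Rightarrow> fm" where "Cons a = Imp (Box a) (Dia a)"
definition Incons :: "fm \<Rightarrow> fm" where "Incons a = Neg (Cons a)"

inductive CPL_ax :: "fm \<Rightarrow> bool" where
  A1: "CPL_ax (Imp a (Imp b a))"
| A2: "CPL_ax (Imp (Imp a (Imp b c)) (Imp (Imp a b) (Imp a c)))"
| A3: "CPL_ax (Imp (Imp (Neg b) (Neg a)) (Imp (Imp (Neg b) a) b))"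

inductive common_ax :: "fm \<Rightarrow> bool" where
  M1: "common_ax (Imp (Neg (Dia a)) (Box (Imp a b)))"
| M2: "common_ax (Imp (Box b) (Box (Imp a b)))"
| DN1: "common_ax (Imp (Box a) (Box (Neg (Neg a))))"
| DN2: "common_ax (Imp (Box (Neg (Neg a))) (Box a))"

inductive Km_ax :: "fm \<Rightarrow> bool" where
  K': "Km_ax (Imp (Dia a) (Imp (Box (Imp a b)) (Imp (Box a) (Box b))))"
| K1': "Km_ax (Imp (Dia (Neg b)) (Imp (Box (Imp a b)) (Imp (Dia a) (Dia b))))"
| K2': "Km_ax (Imp (Dia a) (Imp (Dia (Imp a b)) (Imp (Box a) (Dia b))))"
| M3': "Km_ax (Imp (Or (Dia a) (Dia (Neg a))) (Imp (Dia b) (Dia (Imp a b))))"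
| M4': "Km_ax (Imp (Dia (Neg b)) (Imp (Dia (Neg a)) (Dia (Imp a b))))"
| I1: "Km_ax (Imp (And (Box a) (Box (Neg a))) (And (Box (Imp a b)) (Box (Neg (Imp a b)))))"
| I2: "Km_ax (Imp (And (Box b) (Box (Neg b))) (And (Box (Imp a b)) (Box (Neg (Imp a b)))))"

inductive Kmc_ax :: "fm \<Rightarrow> bool" where
  K'': "Kmc_ax (Imp (Cons a) (Imp (Box (Imp a b)) (Imp (Box a) (Box b))))"
| K1'': "Kmc_ax (Imp (Cons b) (Imp (Box (Imp a b)) (Imp (Dia a) (Dia b))))"
| K2'': "Kmc_ax (Imp (Cons a) (Imp (Dia (Imp a b)) (Imp (Box a) (Dia b))))"
| M3'': "Kmc_ax (Imp (Cons a) (Imp (Dia b) (Dia (Imp a b))))"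
| M4'': "Kmc_ax (Imp (Cons b) (Imp (Dia (Neg a)) (Dia (Imp a b))))"
| I1': "Kmc_ax (Imp (Incons a) (Incons (Imp a b)))"
| I2': "Kmc_ax (Imp (Incons b) (Incons (Imp a b)))"

inductive derivable :: "(fm \<Rightarrow> bool) \<Rightarrow> fm set \<Rightarrow> fm \<Rightarrow> bool" for Ax where
  ax: "Ax a \<Longrightarrow> derivable Ax G a"
| hyp: "a \<in> G \<Longrightarrow> derivable Ax G a"
| mp: "derivable Ax G (Imp a b) \<Longrightarrow> derivable Ax G a \<Longrightarrow> derivable Ax G b"

definition Km_derives :: "fm set \<Rightarrow> fm \<Rightarrow> bool" where
  "Km_derives G a = derivable (\<lambda>f. CPL_ax f \<or> common_ax f \<or> Km_ax f) G a"

definition Kmc_derives :: "fm set \<Rightarrow> fm \<Rightarrow> bool" where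
  "Kmc_derives G a = derivable (\<lambda>f. CPL_ax f \<or> common_ax f \<or> Kmc_ax f) G a"

end

theory Submission
  imports Defs
begin

lemma lift_ax:
  assumes "derivable A G f" "\<And>x. A x \<Longrightarrow> B x"
  shows "derivable B G f"
  using assms(1) by induction (auto intro: derivable.intros assms(2))

lemma weaken:
  assumes "derivable A G f" "G \<subseteq> H"
  shows "derivable A H f"
  using assms by induction (auto intro: derivable.intros)

abbreviation "PD \<equiv> derivable CPL_ax"

lemma pax1: "PD G (Imp a (Imp b a))" by (intro derivable.ax CPL_ax.intros)
lemma pax2: "PD G (Imp (Imp a (Imp b c)) (Imp (Imp a b) (Imp a c)))" by (intro derivable.ax CPL_ax.intros)
lemma pax3: "PD G (Imp (Imp (Neg b) (Neg a)) (Imp (Imp (Neg b) a) b))" by (intro derivable.ax CPL_ax.intros)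

lemma pmp: "PD G (Imp a b) \<Longrightarrow> PD G a \<Longrightarrow> PD G b" by (rule derivable.mp)

lemma imp_refl: "PD G (Imp a a)"
  by (rule pmp[OF pmp[OF pax2 pax1] pax1])

lemma deduct_aux: "PD H b \<Longrightarrow> H = insert a G \<Longrightarrow> PD G (Imp a b)"
proof (induction rule: derivable.induct)
  case (ax x)
  have "PD G x" using ax.hyps by (rule derivable.ax)
  then show ?case by (rule pmp[OF pax1])
next
  case (hyp x)
  show ?case
  proof (cases "x = a")
    case True then show ?thesis using imp_refl by simp
  next
    case False then have "x \<in> G" using hyp by auto
    then have "PD G x" by (rule derivable.hyp)
    then show ?thesis by (rule pmp[OF pax1])
  qed
next
  case (mp H' x y)
  have 1: "PD G (Imp a (Imp x y))" using mp by blast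
  have 2: "PD G (Imp a x)" using mp by blast
  show ?case by (rule pmp[OF pmp[OF pax2 1] 2])
qed

lemma deduct: "PD (insert a G) b \<Longrightarrow> PD G (Imp a b)"
  using deduct_aux by blast

lemma hypI: "a \<in> G \<Longrightarrow> PD G a" by (rule derivable.hyp)

lemma undeduct: "PD G (Imp a b) \<Longrightarrow> PD (insert a G) b"
proof -
  assume "PD G (Imp a b)"
  then have "PD (insert a G) (Imp a b)" by (rule weaken) auto
  moreover have "PD (insert a G) a" by (rule hypI) simp
  ultimately show ?thesis by (rule pmp)
qed

lemma dne: "PD G (Imp (Neg (Neg a)) a)"
proof -
  let ?H = "insert (Neg (Neg a)) G"
  have h: "PD ?H (Neg (Neg a))" by (rule hypI) simp
  have "PD ?H a"
    by (rule pmp[OF pmp[OF pax3 pmp[OF pax1 h]] imp_refl])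
  then show ?thesis by (rule deduct)
qed

lemma dni: "PD G (Imp a (Neg (Neg a)))"
proof -
  have h: "PD (insert a G) a" by (rule hypI) simp
  have "PD (insert a G) (Neg (Neg a))"
    by (rule pmp[OF pmp[OF pax3 dne] pmp[OF pax1 h]])
  then show ?thesis by (rule deduct)
qed

lemma efq: "PD G (Imp (Neg a) (Imp a b))"
proof -
  let ?H = "insert a (insert (Neg a) G)"
  have h1: "PD ?H a" by (rule hypI) simp
  have h2: "PD ?H (Neg a)" by (rule hypI) simp
  have "PD ?H b"
    by (rule pmp[OF pmp[OF pax3 pmp[OF pax1 h2]] pmp[OF pax1 h1]])
  then show ?thesis by (intro deduct)
qed

lemma contra: "PD G (Imp (Imp a b) (Imp (Neg b) (Neg a)))"
proof -
  let ?H = "insert (Neg b) (insert (Imp a b) G)"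
  have h1: "PD (insert (Neg (Neg a)) ?H) (Imp a b)" by (rule hypI) simp
  have h2: "PD (insert (Neg (Neg a)) ?H) (Neg (Neg a))" by (rule hypI) simp
  have "PD (insert (Neg (Neg a)) ?H) b"
    by (rule pmp[OF h1 pmp[OF dne h2]])
  then have 1: "PD ?H (Imp (Neg (Neg a)) b)" by (rule deduct)
  have h3: "PD ?H (Neg b)" by (rule hypI) simp
  have "PD ?H (Neg a)"
    by (rule pmp[OF pmp[OF pax3 pmp[OF pax1 h3]] 1])
  then show ?thesis by (intro deduct)
qed

lemma impneg: "PD G (Imp a (Imp (Neg b) (Neg (Imp a b))))"
proof -
  have h1: "PD (insert (Imp a b) (insert a G)) (Imp a b)" by (rule hypI) simp
  have h2: "PD (insert (Imp a b) (insert a G)) a" by (rule hypI) simp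
  have "PD (insert (Imp a b) (insert a G)) b"
    by (rule pmp[OF h1 h2])
  then have "PD (insert a G) (Imp (Imp a b) b)" by (rule deduct)
  then have "PD (insert a G) (Imp (Neg b) (Neg (Imp a b)))" by (rule pmp[OF contra])
  then show ?thesis by (rule deduct)
qed

lemma cases_lem: "PD G (Imp (Imp a b) (Imp (Imp (Neg a) b) b))"
proof -
  let ?H = "insert (Imp (Neg a) b) (insert (Imp a b) G)"
  have h1: "PD ?H (Imp a b)" by (rule hypI) simp
  have h2: "PD ?H (Imp (Neg a) b)" by (rule hypI) simp
  have 1: "PD ?H (Imp (Neg b) (Neg a))" by (rule pmp[OF contra h1])
  have 2: "PD ?H (Imp (Neg b) (Neg (Neg a)))" by (rule pmp[OF contra h2])
  have "PD (insert (Neg b) ?H) a"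
    by (rule pmp[OF dne undeduct[OF 2]])
  then have 3: "PD ?H (Imp (Neg b) a)" by (rule deduct)
  have "PD ?H b" by (rule pmp[OF pmp[OF pax3 1] 3])
  then show ?thesis by (intro deduct)
qed

fun atoms :: "fm \<Rightarrow> fm set" where
  "atoms (Var n) = {Var n}"
| "atoms (Box a) = {Box a}"
| "atoms (Neg a) = atoms a"
| "atoms (Imp a b) = atoms a \<union> atoms b"

fun eval :: "(fm \<Rightarrow> bool) \<Rightarrow> fm \<Rightarrow> bool" where
  "eval v (Var n) = v (Var n)"
| "eval v (Box a) = v (Box a)"
| "eval v (Neg a) = (\<not> eval v a)"
| "eval v (Imp a b) = (eval v a \<longrightarrow> eval v b)"

definition lit :: "(fm \<Rightarrow> bool) \<Rightarrow> fm \<Rightarrow> fm" where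
  "lit v p = (if v p then p else Neg p)"

lemma finite_atoms: "finite (atoms f)" by (induction f) auto

lemma kalmar: "\<forall>p\<in>atoms f. lit v p \<in> H \<Longrightarrow> PD H (if eval v f then f else Neg f)"
proof (induction f)
  case (Var n) then show ?case by (auto simp: lit_def intro: hypI)
next
  case (Box a) then show ?case by (auto simp: lit_def intro: hypI)
next
  case (Neg a) then show ?case by (auto intro: pmp[OF dni])
next
  case (Imp a b)
  then have A: "PD H (if eval v a then a else Neg a)" and B: "PD H (if eval v b then b else Neg b)"
    by auto
  show ?case
  proof (cases "eval v b")
    case True then show ?thesis using B by (auto intro: pmp[OF pax1])
  next
    case False
    show ?thesis
    proof (cases "eval v a")
      case True then show ?thesis using A B False by (auto intro: pmp[OF pmp[OF impneg]])
    next
      case F2: False then show ?thesis using A by (auto intro: pmp[OF efq])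
    qed
  qed
qed

definition taut :: "fm \<Rightarrow> bool" where "taut f = (\<forall>v. eval v f)"

lemma compl_aux:
  assumes T: "taut f"
  shows "finite S \<Longrightarrow> S \<subseteq> atoms f \<Longrightarrow> \<forall>v. PD (lit v ` (atoms f - S)) f"
proof (induction S rule: finite_induct)
  case empty
  show ?case
  proof
    fix v
    have "PD (lit v ` (atoms f - {})) (if eval v f then f else Neg f)"
      by (rule kalmar) auto
    then show "PD (lit v ` (atoms f - {})) f" using T by (simp add: taut_def)
  qed
next
  case (insert p S)
  show ?case
  proof
    fix v
    let ?R = "lit v ` (atoms f - insert p S)"
    have p: "p \<in> atoms f" "p \<notin> S" using insert by auto
    have e1: "lit (v(p:=True)) ` (atoms f - S) = insert p ?R"
      using p by (auto simp: lit_def)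
    have e2: "lit (v(p:=False)) ` (atoms f - S) = insert (Neg p) ?R"
      using p by (auto simp: lit_def)
    have "PD (insert p ?R) f" using insert.IH[rule_format, of "v(p:=True)"] insert.prems e1 by simp
    then have 1: "PD ?R (Imp p f)" by (rule deduct)
    have "PD (insert (Neg p) ?R) f" using insert.IH[rule_format, of "v(p:=False)"] insert.prems e2 by simp
    then have 2: "PD ?R (Imp (Neg p) f)" by (rule deduct)
    show "PD ?R f" by (rule pmp[OF pmp[OF cases_lem 1] 2])
  qed
qed

lemma taut_PD: "taut f \<Longrightarrow> PD {} f"
  using compl_aux[of f "atoms f"] finite_atoms by auto

lemma taut_der:
  assumes "taut f" "\<And>x. CPL_ax x \<Longrightarrow> A x"
  shows "derivable A G f"
proof -
  have "derivable A {} f" using lift_ax[of CPL_ax "{}" f A] taut_PD[OF assms(1)] assms(2) by blast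
  then show ?thesis by (rule weaken) simp
qed

abbreviation "AKm \<equiv> (\<lambda>f. CPL_ax f \<or> common_ax f \<or> Km_ax f)"
abbreviation "AKmc \<equiv> (\<lambda>f. CPL_ax f \<or> common_ax f \<or> Kmc_ax f)"

lemma t1: "derivable A G p \<Longrightarrow> taut (Imp p q) \<Longrightarrow> (\<And>x. CPL_ax x \<Longrightarrow> A x) \<Longrightarrow> derivable A G q"
proof -
  assume a: "derivable A G p" "taut (Imp p q)" "\<And>x. CPL_ax x \<Longrightarrow> A x"
  have "derivable A G (Imp p q)" using taut_der[of _ A] a by blast
  then show ?thesis using a(1) by (rule derivable.mp)
qed

lemma t2: "derivable A G p \<Longrightarrow> derivable A G p2 \<Longrightarrow> taut (Imp p (Imp p2 q)) \<Longrightarrow> (\<And>x. CPL_ax x \<Longrightarrow> A x) \<Longrightarrow> derivable A G q"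
proof -
  assume a: "derivable A G p" "derivable A G p2" "taut (Imp p (Imp p2 q))" "\<And>x. CPL_ax x \<Longrightarrow> A x"
  have "derivable A G (Imp p (Imp p2 q))" using taut_der[of _ A] a by blast
  then show ?thesis using a(1,2) by (blast intro: derivable.mp)
qed

lemma t3: "derivable A G p \<Longrightarrow> derivable A G p2 \<Longrightarrow> derivable A G p3 \<Longrightarrow> taut (Imp p (Imp p2 (Imp p3 q))) \<Longrightarrow> (\<And>x. CPL_ax x \<Longrightarrow> A x) \<Longrightarrow> derivable A G q"
proof -
  assume a: "derivable A G p" "derivable A G p2" "derivable A G p3" "taut (Imp p (Imp p2 (Imp p3 q)))" "\<And>x. CPL_ax x \<Longrightarrow> A x"
  have "derivable A G (Imp p (Imp p2 (Imp p3 q)))" using taut_der[of _ A] a by blast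
  then show ?thesis using a(1,2,3) by (blast intro: derivable.mp)
qed

lemmas defs = taut_def Dia_def Or_def And_def Cons_def Incons_def

lemma Km_in_Kmc_0: "derivable AKmc G (Imp (Dia a) (Imp (Box (Imp a b)) (Imp (Box a) (Box b))))"
proof -
  have h0: "derivable AKmc G (Imp (Cons a) (Imp (Box (Imp a b)) (Imp (Box a) (Box b))))"
    by (auto intro: derivable.ax Kmc_ax.intros)
  show ?thesis by (rule t1[OF h0]) (auto simp: defs)
qed

lemma Km_in_Kmc_1: "derivable AKmc G (Imp (Dia (Neg b)) (Imp (Box (Imp a b)) (Imp (Dia a) (Dia b))))"
proof -
  have h0: "derivable AKmc G (Imp (Cons b) (Imp (Box (Imp a b)) (Imp (Dia a) (Dia b))))"
    by (auto intro: derivable.ax Kmc_ax.intros)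
  have h1: "derivable AKmc G (Imp (Box b) (Box (Neg (Neg b))))"
    by (auto intro: derivable.ax common_ax.intros)
  show ?thesis by (rule t2[OF h0 h1]) (auto simp: defs)
qed

lemma Km_in_Kmc_2: "derivable AKmc G (Imp (Dia a) (Imp (Dia (Imp a b)) (Imp (Box a) (Dia b))))"
proof -
  have h0: "derivable AKmc G (Imp (Cons a) (Imp (Dia (Imp a b)) (Imp (Box a) (Dia b))))"
    by (auto intro: derivable.ax Kmc_ax.intros)
  show ?thesis by (rule t1[OF h0]) (auto simp: defs)
qed

lemma Km_in_Kmc_3: "derivable AKmc G (Imp (Or (Dia a) (Dia (Neg a))) (Imp (Dia b) (Dia (Imp a b))))"
proof -
  have h0: "derivable AKmc G (Imp (Cons a) (Imp (Dia b) (Dia (Imp a b))))"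
    by (auto intro: derivable.ax Kmc_ax.intros)
  have h1: "derivable AKmc G (Imp (Box a) (Box (Neg (Neg a))))"
    by (auto intro: derivable.ax common_ax.intros)
  show ?thesis by (rule t2[OF h0 h1]) (auto simp: defs)
qed

lemma Km_in_Kmc_4: "derivable AKmc G (Imp (Dia (Neg b)) (Imp (Dia (Neg a)) (Dia (Imp a b))))"
proof -
  have h0: "derivable AKmc G (Imp (Cons b) (Imp (Dia (Neg a)) (Dia (Imp a b))))"
    by (auto intro: derivable.ax Kmc_ax.intros)
  have h1: "derivable AKmc G (Imp (Box b) (Box (Neg (Neg b))))"
    by (auto intro: derivable.ax common_ax.intros)
  show ?thesis by (rule t2[OF h0 h1]) (auto simp: defs)
qed

lemma Km_in_Kmc_5: "derivable AKmc G (Imp (And (Box a) (Box (Neg a))) (And (Box (Imp a b)) (Box (Neg (Imp a b)))))"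
proof -
  have h0: "derivable AKmc G (Imp (Incons a) (Incons (Imp a b)))"
    by (auto intro: derivable.ax Kmc_ax.intros)
  show ?thesis by (rule t1[OF h0]) (auto simp: defs)
qed

lemma Km_in_Kmc_6: "derivable AKmc G (Imp (And (Box b) (Box (Neg b))) (And (Box (Imp a b)) (Box (Neg (Imp a b)))))"
proof -
  have h0: "derivable AKmc G (Imp (Incons b) (Incons (Imp a b)))"
    by (auto intro: derivable.ax Kmc_ax.intros)
  show ?thesis by (rule t1[OF h0]) (auto simp: defs)
qed

lemma Km_in_Kmc: "Km_ax f \<Longrightarrow> derivable AKmc G f"
  by (induction rule: Km_ax.induct) (rule Km_in_Kmc_0 Km_in_Kmc_1 Km_in_Kmc_2 Km_in_Kmc_3 Km_in_Kmc_4 Km_in_Kmc_5 Km_in_Kmc_6)+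

lemma Kmc_in_Km_0: "derivable AKm G (Imp (Cons a) (Imp (Box (Imp a b)) (Imp (Box a) (Box b))))"
proof -
  have h0: "derivable AKm G (Imp (Dia a) (Imp (Box (Imp a b)) (Imp (Box a) (Box b))))"
    by (auto intro: derivable.ax Km_ax.intros)
  show ?thesis by (rule t1[OF h0]) (auto simp: defs)
qed

lemma Kmc_in_Km_1: "derivable AKm G (Imp (Cons b) (Imp (Box (Imp a b)) (Imp (Dia a) (Dia b))))"
proof -
  have h0: "derivable AKm G (Imp (Dia (Neg b)) (Imp (Box (Imp a b)) (Imp (Dia a) (Dia b))))"
    by (auto intro: derivable.ax Km_ax.intros)
  have h1: "derivable AKm G (Imp (Box (Neg (Neg b))) (Box b))"
    by (auto intro: derivable.ax common_ax.intros)
  show ?thesis by (rule t2[OF h0 h1]) (auto simp: defs)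
qed

lemma Kmc_in_Km_2: "derivable AKm G (Imp (Cons a) (Imp (Dia (Imp a b)) (Imp (Box a) (Dia b))))"
proof -
  have h0: "derivable AKm G (Imp (Dia a) (Imp (Dia (Imp a b)) (Imp (Box a) (Dia b))))"
    by (auto intro: derivable.ax Km_ax.intros)
  show ?thesis by (rule t1[OF h0]) (auto simp: defs)
qed

lemma Kmc_in_Km_3: "derivable AKm G (Imp (Cons a) (Imp (Dia b) (Dia (Imp a b))))"
proof -
  have h0: "derivable AKm G (Imp (Or (Dia a) (Dia (Neg a))) (Imp (Dia b) (Dia (Imp a b))))"
    by (auto intro: derivable.ax Km_ax.intros)
  have h1: "derivable AKm G (Imp (Box (Neg (Neg a))) (Box a))"
    by (auto intro: derivable.ax common_ax.intros)
  show ?thesis by (rule t2[OF h0 h1]) (auto simp: defs)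
qed

lemma Kmc_in_Km_4: "derivable AKm G (Imp (Cons b) (Imp (Dia (Neg a)) (Dia (Imp a b))))"
proof -
  have h0: "derivable AKm G (Imp (Dia (Neg b)) (Imp (Dia (Neg a)) (Dia (Imp a b))))"
    by (auto intro: derivable.ax Km_ax.intros)
  have h1: "derivable AKm G (Imp (Or (Dia a) (Dia (Neg a))) (Imp (Dia b) (Dia (Imp a b))))"
    by (auto intro: derivable.ax Km_ax.intros)
  have h2: "derivable AKm G (Imp (Box (Neg (Neg b))) (Box b))"
    by (auto intro: derivable.ax common_ax.intros)
  show ?thesis by (rule t3[OF h0 h1 h2]) (auto simp: defs)
qed

lemma Kmc_in_Km_5: "derivable AKm G (Imp (Incons a) (Incons (Imp a b)))"
proof -
  have h0: "derivable AKm G (Imp (And (Box a) (Box (Neg a))) (And (Box (Imp a b)) (Box (Neg (Imp a b)))))"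
    by (auto intro: derivable.ax Km_ax.intros)
  show ?thesis by (rule t1[OF h0]) (auto simp: defs)
qed

lemma Kmc_in_Km_6: "derivable AKm G (Imp (Incons b) (Incons (Imp a b)))"
proof -
  have h0: "derivable AKm G (Imp (And (Box b) (Box (Neg b))) (And (Box (Imp a b)) (Box (Neg (Imp a b)))))"
    by (auto intro: derivable.ax Km_ax.intros)
  show ?thesis by (rule t1[OF h0]) (auto simp: defs)
qed

lemma Kmc_in_Km: "Kmc_ax f \<Longrightarrow> derivable AKm G f"
  by (induction rule: Kmc_ax.induct) (rule Kmc_in_Km_0 Kmc_in_Km_1 Kmc_in_Km_2 Kmc_in_Km_3 Kmc_in_Km_4 Kmc_in_Km_5 Kmc_in_Km_6)+

theorem mainTheorem10:
  fixes \<Gamma> :: "fm set" and \<alpha> :: fm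
  shows "Km_derives \<Gamma> \<alpha> \<longleftrightarrow> Kmc_derives \<Gamma> \<alpha>"
proof
  assume "Km_derives \<Gamma> \<alpha>"
  then have "derivable AKm \<Gamma> \<alpha>" by (simp add: Km_derives_def)
  then have "derivable AKmc \<Gamma> \<alpha>"
    by induction (auto intro: derivable.intros Km_in_Kmc)
  then show "Kmc_derives \<Gamma> \<alpha>" by (simp add: Kmc_derives_def)
next
  assume "Kmc_derives \<Gamma> \<alpha>"
  then have "derivable AKmc \<Gamma> \<alpha>" by (simp add: Kmc_derives_def)
  then have "derivable AKm \<Gamma> \<alpha>"
    by induction (auto intro: derivable.intros Kmc_in_Km)
  then show "Km_derives \<Gamma> \<alpha>" by (simp add: Km_derives_def)
qed

end
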